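(* Let $n$ training samples carry labels in $\{1,\dots,K\}$ with indicator matrix $F\in\mathbb{R}^{K\times n}$ (rows $F_1,\dots,F_K$). Let the basis $G_1,\dots,G_r$ ($r\le n$) be a subset of the training samples with every class containing at least one basis vector, and let $F_{G_i}$ be the class indicator of $G_i$. Let $W\in\mathbb{R}^{r\times n}$ be entrywise nonnegative with positive column sums, $S=\operatorname{diag}(\mathbf{1}^TW)$, $\tilde W=WS^{-1}$ of full row rank, and suppose $W_{ij}=0$ whenever $F_{G_i}\neq F_j$. For each class $k$ let $\tilde W^{(k)}$ be the submatrix of $\tilde W$ with rows indexed by the basis vectors of class $k$ and columns indexed by the training samples of class $k$. Then the following are equivalent: (i) for every $k$, $F_k/\|F_k\|_2$ is a right singular vector of $\tilde W$ whose singular value equals the largest singular value of $\tilde W^{(k)}$; (ii) the row sums of $\tilde W$ are equal within each class: $\sum_l\tilde W_{il}=\sum_l\tilde W_{jl}$ for all $i,j$ with $F_{G_i}=F_{G_j}$.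
   Context: The columns of $F$ are standard basis vectors of $\mathbb{R}^K$: $F_j=e_k$ iff sample $j$ is in class $k$. Under the stated (ideal bipartite-graph) condition, after grouping rows and columns by class, $\tilde W$ is block diagonal with blocks $\tilde W^{(k)}$; statement (i) is the meaning of "the rows of $F$ are the right singular vectors of $\tilde W$ corresponding to the largest singular values" (of the respective class blocks). *)

theory Defs
  imports Complex_Main
begin

text \<open>Real matrices are represented as functions A :: 'a \<Rightarrow> 'b \<Rightarrow> real, considered on
  a finite row index set I and a finite column index set J (so a submatrix is just the
  same function on smaller index sets).\<close>

definition sing_triple ::
  "'a set \<Rightarrow> 'b set \<Rightarrow> ('a \<Rightarrow> 'b \<Rightarrow> real) \<Rightarrow> real \<Rightarrow> ('a \<Rightarrow> real) \<Rightarrow> ('b \<Rightarrow> real) \<Rightarrow> bool"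
  where
  "sing_triple I J A \<sigma> u v \<longleftrightarrow>
     \<sigma> \<ge> 0 \<and> (\<Sum>i\<in>I. (u i)\<^sup>2) = 1 \<and> (\<Sum>j\<in>J. (v j)\<^sup>2) = 1 \<and>
     (\<forall>i\<in>I. (\<Sum>j\<in>J. A i j * v j) = \<sigma> * u i) \<and>
     (\<forall>j\<in>J. (\<Sum>i\<in>I. A i j * u i) = \<sigma> * v j)"

definition right_singular_vector ::
  "'a set \<Rightarrow> 'b set \<Rightarrow> ('a \<Rightarrow> 'b \<Rightarrow> real) \<Rightarrow> real \<Rightarrow> ('b \<Rightarrow> real) \<Rightarrow> bool"
  where "right_singular_vector I J A \<sigma> v \<longleftrightarrow> (\<exists>u. sing_triple I J A \<sigma> u v)"

definition singular_values :: "'a set \<Rightarrow> 'b set \<Rightarrow> ('a \<Rightarrow> 'b \<Rightarrow> real) \<Rightarrow> real set"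
  where "singular_values I J A = {\<sigma>. \<exists>u v. sing_triple I J A \<sigma> u v}"

definition largest_singular_value :: "'a set \<Rightarrow> 'b set \<Rightarrow> ('a \<Rightarrow> 'b \<Rightarrow> real) \<Rightarrow> real"
  where "largest_singular_value I J A = Max (singular_values I J A)"

definition col_normalize :: "nat \<Rightarrow> (nat \<Rightarrow> nat \<Rightarrow> real) \<Rightarrow> nat \<Rightarrow> nat \<Rightarrow> real"
  where "col_normalize r W i j = W i j / (\<Sum>l<r. W l j)"

end

theory Submission imports Defs "HOL-Analysis.Analysis" begin
lemma schur_bound:
  fixes A :: "'a \<Rightarrow> 'b \<Rightarrow> real"
  assumes fI: "finite I" and fJ: "finite J"
    and nn: "\<And>i j. i\<in>I \<Longrightarrow> j\<in>J \<Longrightarrow> A i j \<ge> 0"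
    and rs: "\<And>i. i\<in>I \<Longrightarrow> (\<Sum>j\<in>J. A i j) = c"
    and cs: "\<And>j. j\<in>J \<Longrightarrow> (\<Sum>i\<in>I. A i j) = 1"
    and st: "sing_triple I J A \<sigma> u v"
  shows "\<sigma> \<le> sqrt c"
proof -
  from st have s0: "\<sigma> \<ge> 0" and nu: "(\<Sum>i\<in>I. (u i)\<^sup>2) = 1" and nv: "(\<Sum>j\<in>J. (v j)\<^sup>2) = 1"
    and av: "\<And>i. i\<in>I \<Longrightarrow> (\<Sum>j\<in>J. A i j * v j) = \<sigma> * u i"
    unfolding sing_triple_def by auto
  have cs_i: "(\<Sum>j\<in>J. A i j * v j)\<^sup>2 \<le> c * (\<Sum>j\<in>J. A i j * (v j)\<^sup>2)" if i: "i \<in> I" for i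
  proof -
    have "(\<Sum>j\<in>J. A i j * v j) = (\<Sum>j\<in>J. sqrt (A i j) * (sqrt (A i j) * v j))"
      by (rule sum.cong) (use nn[OF i] in \<open>auto simp: real_sqrt_mult_self\<close>)
    hence "(\<Sum>j\<in>J. A i j * v j)\<^sup>2 \<le> (\<Sum>j\<in>J. (sqrt (A i j))\<^sup>2) * (\<Sum>j\<in>J. (sqrt (A i j) * v j)\<^sup>2)"
      using Cauchy_Schwarz_ineq_sum by metis
    also have "(\<Sum>j\<in>J. (sqrt (A i j))\<^sup>2) = c"
      using rs[OF i] nn[OF i] by (simp)
    also have "(\<Sum>j\<in>J. (sqrt (A i j) * v j)\<^sup>2) = (\<Sum>j\<in>J. A i j * (v j)\<^sup>2)"
      by (rule sum.cong) (use nn[OF i] in \<open>auto simp: power_mult_distrib\<close>)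
    finally show ?thesis .
  qed
  have "\<sigma>\<^sup>2 = (\<Sum>i\<in>I. (\<sigma> * u i)\<^sup>2)"
    by (simp add: power_mult_distrib nu flip: sum_distrib_left)
  also have "\<dots> = (\<Sum>i\<in>I. (\<Sum>j\<in>J. A i j * v j)\<^sup>2)"
    using av by simp
  also have "\<dots> \<le> (\<Sum>i\<in>I. c * (\<Sum>j\<in>J. A i j * (v j)\<^sup>2))"
    by (rule sum_mono) (rule cs_i)
  also have "\<dots> = c * (\<Sum>j\<in>J. (\<Sum>i\<in>I. A i j) * (v j)\<^sup>2)"
    by (simp add: sum_distrib_left sum_distrib_right sum.swap[of _ I J] mult.assoc)
  also have "\<dots> = c"
    using cs nv by simp
  finally have "\<sigma>\<^sup>2 \<le> c" .
  thus ?thesis using s0 real_le_rsqrt by blast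
qed

lemma bessel_fin:
  fixes w :: "'e \<Rightarrow> 'b \<Rightarrow> real"
  assumes fJ: "finite J" and fF: "finite F"
    and nrm: "\<And>e. e\<in>F \<Longrightarrow> (\<Sum>l\<in>J. (w e l)\<^sup>2) = 1"
    and orth: "\<And>e e'. e\<in>F \<Longrightarrow> e'\<in>F \<Longrightarrow> e \<noteq> e' \<Longrightarrow> (\<Sum>l\<in>J. w e l * w e' l) = 0"
    and j: "j \<in> J"
  shows "(\<Sum>e\<in>F. (w e j)\<^sup>2) \<le> 1"
proof -
  define a where "a e = w e j" for e
  define P where "P l = (\<Sum>e\<in>F. a e * w e l)" for l
  define d where "d l = (if l = j then 1 else (0::real))" for l
  have ip: "(\<Sum>l\<in>J. w e l * w e' l) = (if e = e' then 1 else 0)" if "e\<in>F" "e'\<in>F" for e e'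
    using nrm[OF that(1)] orth[OF that] by (auto simp: power2_eq_square)
  have "0 \<le> (\<Sum>l\<in>J. (d l - P l)\<^sup>2)" by (simp add: sum_nonneg)
  also have "\<dots> = (\<Sum>l\<in>J. (d l)\<^sup>2) - 2 * (\<Sum>l\<in>J. d l * P l) + (\<Sum>l\<in>J. (P l)\<^sup>2)"
    by (simp add: power2_eq_square algebra_simps sum.distrib sum_subtractf sum_distrib_left)
  also have "(\<Sum>l\<in>J. (d l)\<^sup>2) = 1"
  proof -
    have "(\<Sum>l\<in>J. (d l)\<^sup>2) = (\<Sum>l\<in>J. if l = j then 1 else 0)"
      by (rule sum.cong) (auto simp: d_def)
    also have "\<dots> = 1" using fJ j by simp
    finally show ?thesis .
  qed
  also have "(\<Sum>l\<in>J. d l * P l) = P j"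
  proof -
    have "(\<Sum>l\<in>J. d l * P l) = (\<Sum>l\<in>J. if l = j then P l else 0)"
      by (rule sum.cong) (auto simp: d_def)
    also have "\<dots> = P j" using fJ j by simp
    finally show ?thesis .
  qed
  also have "P j = (\<Sum>e\<in>F. (a e)\<^sup>2)"
    by (simp add: P_def a_def power2_eq_square)
  also have "(\<Sum>l\<in>J. (P l)\<^sup>2) = (\<Sum>e\<in>F. \<Sum>e'\<in>F. a e * a e' * (\<Sum>l\<in>J. w e l * w e' l))"
    unfolding P_def power2_eq_square sum_product
    by (simp add: sum_distrib_left sum.swap[of _ J] mult_ac)
  also have "\<dots> = (\<Sum>e\<in>F. \<Sum>e'\<in>F. a e * a e' * (if e = e' then 1 else 0))"
    by (intro sum.cong refl) (simp add: ip)
  also have "\<dots> = (\<Sum>e\<in>F. (a e)\<^sup>2)"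
    using fF by (simp add: power2_eq_square if_distrib cong: if_cong)
  finally show ?thesis by (simp add: a_def)
qed

lemma orth_card:
  fixes w :: "'e \<Rightarrow> 'b \<Rightarrow> real"
  assumes fJ: "finite J"
    and nrm: "\<And>e. e\<in>E \<Longrightarrow> (\<Sum>l\<in>J. (w e l)\<^sup>2) = 1"
    and orth: "\<And>e e'. e\<in>E \<Longrightarrow> e'\<in>E \<Longrightarrow> e \<noteq> e' \<Longrightarrow> (\<Sum>l\<in>J. w e l * w e' l) = 0"
  shows "finite E"
proof -
  have bound: "card F \<le> card J" if FE: "F \<subseteq> E" and fF: "finite F" for F
  proof -
    have "(\<Sum>e\<in>F. \<Sum>l\<in>J. (w e l)\<^sup>2) = (\<Sum>e\<in>F. 1)"
      by (rule sum.cong) (use nrm FE in blast)+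
    hence "real (card F) = (\<Sum>e\<in>F. \<Sum>l\<in>J. (w e l)\<^sup>2)" by simp
    also have "\<dots> = (\<Sum>l\<in>J. \<Sum>e\<in>F. (w e l)\<^sup>2)" by (rule sum.swap)
    also have "\<dots> \<le> (\<Sum>l\<in>J. 1)"
    proof (rule sum_mono)
      fix l assume l: "l \<in> J"
      show "(\<Sum>e\<in>F. (w e l)\<^sup>2) \<le> 1"
        by (rule bessel_fin[OF fJ fF _ _ l]) (use nrm orth FE in blast)+
    qed
    finally show ?thesis by simp
  qed
  show ?thesis
  proof (rule ccontr)
    assume "infinite E"
    then obtain F where F: "F \<subseteq> E" "finite F" "card F = Suc (card J)"
      using infinite_arbitrarily_large by blast
    have "card F \<le> card J" by (rule bound[OF F(1) F(2)])
    thus False using F(3) by simp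
  qed
qed

lemma sv_finite:
  fixes A :: "'a \<Rightarrow> 'b \<Rightarrow> real"
  assumes fJ: "finite J"
  shows "finite (singular_values I J A)"
proof -
  define V where "V s = (SOME v. \<exists>u. sing_triple I J A s u v)" for s
  have V: "\<exists>u. sing_triple I J A s u (V s)" if "s \<in> singular_values I J A" for s
  proof -
    from that obtain u v where "sing_triple I J A s u v" unfolding singular_values_def by blast
    hence "\<exists>u. sing_triple I J A s u v" by blast
    thus ?thesis unfolding V_def by (rule someI[where P = "\<lambda>v. \<exists>u. sing_triple I J A s u v"])
  qed
  show ?thesis
  proof (rule orth_card[OF fJ, of _ V])
    fix s assume "s \<in> singular_values I J A"
    then show "(\<Sum>l\<in>J. (V s l)\<^sup>2) = 1" using V unfolding sing_triple_def by blast
  next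
    fix s s' assume a: "s \<in> singular_values I J A" "s' \<in> singular_values I J A" "s \<noteq> s'"
    obtain u where u: "sing_triple I J A s u (V s)" using V a(1) by blast
    obtain u' where u': "sing_triple I J A s' u' (V s')" using V a(2) by blast
    define v where "v = V s"
    define v' where "v' = V s'"
    have s0: "s \<ge> 0" "s' \<ge> 0" using u u' unfolding sing_triple_def by auto
    have e1: "s * (\<Sum>l\<in>J. v l * v' l) = s' * (\<Sum>i\<in>I. u i * u' i)"
    proof -
      have "s * (\<Sum>l\<in>J. v l * v' l) = (\<Sum>l\<in>J. (s * v l) * v' l)"
        by (simp add: sum_distrib_left mult_ac)
      also have "\<dots> = (\<Sum>l\<in>J. (\<Sum>i\<in>I. A i l * u i) * v' l)"
        using u unfolding sing_triple_def v_def by simp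
      also have "\<dots> = (\<Sum>i\<in>I. u i * (\<Sum>l\<in>J. A i l * v' l))"
        by (simp add: sum_distrib_left sum_distrib_right sum.swap[of _ J] mult_ac)
      also have "\<dots> = (\<Sum>i\<in>I. u i * (s' * u' i))"
        using u' unfolding sing_triple_def v'_def by simp
      finally show ?thesis by (simp add: sum_distrib_left mult_ac)
    qed
    have e2: "s * (\<Sum>i\<in>I. u i * u' i) = s' * (\<Sum>l\<in>J. v l * v' l)"
    proof -
      have "s * (\<Sum>i\<in>I. u i * u' i) = (\<Sum>i\<in>I. (s * u i) * u' i)"
        by (simp add: sum_distrib_left mult_ac)
      also have "\<dots> = (\<Sum>i\<in>I. (\<Sum>l\<in>J. A i l * v l) * u' i)"
        using u unfolding sing_triple_def v_def by simp
      also have "\<dots> = (\<Sum>l\<in>J. v l * (\<Sum>i\<in>I. A i l * u' i))"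
        by (simp add: sum_distrib_left sum_distrib_right sum.swap[of _ I] mult_ac)
      also have "\<dots> = (\<Sum>l\<in>J. v l * (s' * v' l))"
        using u' unfolding sing_triple_def v'_def by simp
      finally show ?thesis by (simp add: sum_distrib_left mult_ac)
    qed
    have "s * s * (\<Sum>l\<in>J. v l * v' l) = s' * s' * (\<Sum>l\<in>J. v l * v' l)"
      using e1 e2 by (metis mult.assoc mult.commute)
    hence "(s * s - s' * s') * (\<Sum>l\<in>J. v l * v' l) = 0" by (simp add: algebra_simps)
    moreover have "s * s \<noteq> s' * s'"
    proof
      assume "s * s = s' * s'"
      hence "sqrt (s * s) = sqrt (s' * s')" by simp
      thus False using s0 a(3) by simp
    qed
    ultimately show "(\<Sum>l\<in>J. V s l * V s' l) = 0" by (simp add: v_def v'_def)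
  qed
qed

theorem theorem3:
  fixes n r K :: nat
    and lab :: "nat \<Rightarrow> nat"
    and G :: "nat \<Rightarrow> nat"
    and W :: "nat \<Rightarrow> nat \<Rightarrow> real"
  assumes lab_range: "\<forall>j<n. lab j \<in> {1..K}"
    and G_range: "\<forall>i<r. G i < n"
    and G_inj: "inj_on G {..<r}"
    and r_le: "r \<le> n"
    and classes_covered: "\<forall>k\<in>{1..K}. \<exists>i<r. lab (G i) = k"
    and W_nonneg: "\<forall>i<r. \<forall>j<n. W i j \<ge> 0"
    and colsum_pos: "\<forall>j<n. (\<Sum>i<r. W i j) > 0"
    and full_row_rank: "\<forall>c :: nat \<Rightarrow> real.
           (\<forall>j<n. (\<Sum>i<r. c i * col_normalize r W i j) = 0) \<longrightarrow> (\<forall>i<r. c i = 0)"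
    and W_zero: "\<forall>i<r. \<forall>j<n. lab (G i) \<noteq> lab j \<longrightarrow> W i j = 0"
  shows "(\<forall>k\<in>{1..K}.
            right_singular_vector {..<r} {..<n} (col_normalize r W)
              (largest_singular_value {i. i < r \<and> lab (G i) = k} {j. j < n \<and> lab j = k}
                 (col_normalize r W))
              (\<lambda>j. (if lab j = k then 1 else 0) / sqrt (real (card {l. l < n \<and> lab l = k}))))
         \<longleftrightarrow>
         (\<forall>i<r. \<forall>j<r. lab (G i) = lab (G j) \<longrightarrow>
            (\<Sum>l<n. col_normalize r W i l) = (\<Sum>l<n. col_normalize r W j l))"
proof -
  define A where "A = col_normalize r W"
  have Azero: "A i j = 0" if "i < r" "j < n" "lab (G i) \<noteq> lab j" for i j
    using W_zero that unfolding A_def col_normalize_def by simp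
  have Ann: "A i j \<ge> 0" if "i < r" "j < n" for i j
    using W_nonneg colsum_pos that unfolding A_def col_normalize_def by (simp add: divide_nonneg_pos)
  have Acol: "(\<Sum>i<r. A i j) = 1" if "j < n" for j
    using colsum_pos that unfolding A_def col_normalize_def by (simp add: less_imp_neq[symmetric] flip: sum_divide_distrib)
  have frr: "\<forall>c :: nat \<Rightarrow> real. (\<forall>j<n. (\<Sum>i<r. c i * A i j) = 0) \<longrightarrow> (\<forall>i<r. c i = 0)"
    using full_row_rank unfolding A_def .
  define RS where "RS i = (\<Sum>l<n. A i l)" for i
  have rs_restr: "(\<Sum>l\<in>{j. j < n \<and> lab j = k}. A i l) = RS i" if "i < r" "lab (G i) = k" for i k
    unfolding RS_def
    by (rule sum.mono_neutral_left) (use that in \<open>auto intro!: Azero\<close>)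
  have cs_restr: "(\<Sum>i\<in>{i. i < r \<and> lab (G i) = k}. A i j) = 1" if "j < n" "lab j = k" for j k
  proof -
    have "(\<Sum>i\<in>{i. i < r \<and> lab (G i) = k}. A i j) = (\<Sum>i<r. A i j)"
      by (rule sum.mono_neutral_left) (use that in \<open>auto intro!: Azero\<close>)
    thus ?thesis using Acol that by simp
  qed
  have main: "(\<forall>k\<in>{1..K}.
            right_singular_vector {..<r} {..<n} A
              (largest_singular_value {i. i < r \<and> lab (G i) = k} {j. j < n \<and> lab j = k} A)
              (\<lambda>j. (if lab j = k then 1 else 0) / sqrt (real (card {l. l < n \<and> lab l = k}))))
         \<longleftrightarrow> (\<forall>i<r. \<forall>j<r. lab (G i) = lab (G j) \<longrightarrow> RS i = RS j)"
  proof
    assume H: "\<forall>k\<in>{1..K}.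
            right_singular_vector {..<r} {..<n} A
              (largest_singular_value {i. i < r \<and> lab (G i) = k} {j. j < n \<and> lab j = k} A)
              (\<lambda>j. (if lab j = k then 1 else 0) / sqrt (real (card {l. l < n \<and> lab l = k})))"
    have key: "\<exists>\<sigma>. \<forall>i<r. lab (G i) = k \<longrightarrow> RS i = \<sigma>\<^sup>2" if k: "k \<in> {1..K}" for k
    proof -
      define Jk where "Jk = {l. l < n \<and> lab l = k}"
      define b where "b = sqrt (real (card Jk))"
      obtain i0 where i0: "i0 < r" "lab (G i0) = k" using classes_covered k by blast
      have "G i0 \<in> Jk" using i0 G_range unfolding Jk_def by auto
      hence "card Jk > 0" unfolding Jk_def by (auto simp: card_gt_0_iff)
      hence bpos: "b > 0" unfolding b_def by simp
      define v where "v j = (if lab j = k then 1 else 0) / b" for j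
      obtain \<sigma> u where st: "sing_triple {..<r} {..<n} A \<sigma> u v"
        using H k unfolding right_singular_vector_def v_def b_def Jk_def by blast
      have row: "\<sigma> * u i = RS i / b" if "i < r" "lab (G i) = k" for i
      proof -
        have "\<sigma> * u i = (\<Sum>l<n. A i l * v l)" using st that unfolding sing_triple_def by simp
        also have "\<dots> = (\<Sum>l<n. A i l / b)"
          by (rule sum.cong) (use that Azero in \<open>auto simp: v_def\<close>)
        finally show ?thesis unfolding RS_def by (simp add: sum_divide_distrib)
      qed
      have col: "(\<Sum>i<r. A i j * (if lab (G i) = k then RS i else 0)) = \<sigma>\<^sup>2"
        if "j < n" "lab j = k" for j
      proof -
        have "\<sigma> * (\<sigma> * v j) = \<sigma> * (\<Sum>i<r. A i j * u i)" using st that unfolding sing_triple_def by simp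
        also have "\<dots> = (\<Sum>i<r. A i j * (\<sigma> * u i))" by (simp add: sum_distrib_left mult_ac)
        also have "\<dots> = (\<Sum>i<r. A i j * (if lab (G i) = k then RS i else 0) / b)"
          by (rule sum.cong) (use that Azero row in auto)
        finally have "\<sigma> * (\<sigma> * v j) * b = (\<Sum>i<r. A i j * (if lab (G i) = k then RS i else 0))"
          using bpos by (simp flip: sum_divide_distrib)
        moreover have "\<sigma> * (\<sigma> * v j) * b = \<sigma>\<^sup>2"
          using bpos that by (simp add: v_def power2_eq_square)
        ultimately show ?thesis by simp
      qed
      define cc where "cc i = (if lab (G i) = k then RS i - \<sigma>\<^sup>2 else 0)" for i
      have "\<forall>j<n. (\<Sum>i<r. cc i * A i j) = 0"
      proof (intro allI impI)
        fix j assume j: "j < n"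
        show "(\<Sum>i<r. cc i * A i j) = 0"
        proof (cases "lab j = k")
          case True
          have "(\<Sum>i<r. cc i * A i j) = (\<Sum>i<r. A i j * (if lab (G i) = k then RS i else 0) - \<sigma>\<^sup>2 * A i j)"
            by (rule sum.cong) (use True j Azero in \<open>auto simp: cc_def algebra_simps\<close>)
          also have "\<dots> = \<sigma>\<^sup>2 - \<sigma>\<^sup>2 * 1"
            using col[OF j True] Acol[OF j] by (simp add: sum_subtractf flip: sum_distrib_left)
          finally show ?thesis by simp
        next
          case False
          show ?thesis by (rule sum.neutral) (use False j Azero in \<open>auto simp: cc_def\<close>)
        qed
      qed
      hence "\<forall>i<r. cc i = 0" using frr by blast
      thus ?thesis unfolding cc_def by (intro exI[of _ \<sigma>]) auto
    qed
    show "\<forall>i<r. \<forall>j<r. lab (G i) = lab (G j) \<longrightarrow> RS i = RS j"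
    proof (intro allI impI)
      fix i j assume ij: "i < r" "j < r" "lab (G i) = lab (G j)"
      have "lab (G i) \<in> {1..K}" using ij G_range lab_range by auto
      then obtain \<sigma> where "\<forall>i'<r. lab (G i') = lab (G i) \<longrightarrow> RS i' = \<sigma>\<^sup>2" using key by blast
      thus "RS i = RS j" using ij by metis
    qed
  next
    assume H: "\<forall>i<r. \<forall>j<r. lab (G i) = lab (G j) \<longrightarrow> RS i = RS j"
    show "\<forall>k\<in>{1..K}.
            right_singular_vector {..<r} {..<n} A
              (largest_singular_value {i. i < r \<and> lab (G i) = k} {j. j < n \<and> lab j = k} A)
              (\<lambda>j. (if lab j = k then 1 else 0) / sqrt (real (card {l. l < n \<and> lab l = k})))"
    proof
      fix k assume k: "k \<in> {1..K}"
      define Jk where "Jk = {l. l < n \<and> lab l = k}"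
      define Ik where "Ik = {i. i < r \<and> lab (G i) = k}"
      define b where "b = sqrt (real (card Jk))"
      define a where "a = sqrt (real (card Ik))"
      obtain i0 where i0: "i0 < r" "lab (G i0) = k" using classes_covered k by blast
      have fJ: "finite Jk" and fI: "finite Ik" unfolding Jk_def Ik_def by auto
      have "G i0 \<in> Jk" using i0 G_range unfolding Jk_def by auto
      hence cJ: "card Jk > 0" using fJ by (auto simp: card_gt_0_iff)
      hence bpos: "b > 0" unfolding b_def by simp
      have "i0 \<in> Ik" using i0 unfolding Ik_def by auto
      hence cI: "card Ik > 0" using fI by (auto simp: card_gt_0_iff)
      hence apos: "a > 0" unfolding a_def by simp
      define c where "c = RS i0"
      have RSc: "RS i = c" if "i < r" "lab (G i) = k" for i
        using H that i0 unfolding c_def by metis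
      have c0: "c \<ge> 0" unfolding c_def RS_def using Ann i0 by (intro sum_nonneg) auto
      have rowk: "(\<Sum>l\<in>Jk. A i l) = c" if "i \<in> Ik" for i
        using that rs_restr RSc unfolding Ik_def Jk_def by auto
      have colk: "(\<Sum>i\<in>Ik. A i j) = 1" if "j \<in> Jk" for j
        using that cs_restr unfolding Ik_def Jk_def by auto
      have "c * real (card Ik) = (\<Sum>i\<in>Ik. \<Sum>l\<in>Jk. A i l)" using rowk by simp
      also have "\<dots> = (\<Sum>l\<in>Jk. \<Sum>i\<in>Ik. A i l)" by (rule sum.swap)
      also have "\<dots> = real (card Jk)" using colk by simp
      finally have cIJ: "c * real (card Ik) = real (card Jk)" .
      define s where "s = sqrt c"
      have sab: "s * a = b" unfolding s_def a_def b_def using cIJ by (simp flip: real_sqrt_mult)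
      have s0: "s \<ge> 0" unfolding s_def using c0 by simp
      have ss: "s * s = c" unfolding s_def using c0 by simp
      have aa: "a * a = real (card Ik)" unfolding a_def by simp
      have bb: "b * b = real (card Jk)" unfolding b_def by simp
      define u where "u i = (if lab (G i) = k then 1 else 0) / a" for i
      define v where "v j = (if lab j = k then 1 else 0) / b" for j
      have e1: "c / b = s * (1 / a)"
        using apos bpos sab ss by (simp add: field_simps) (metis mult.assoc mult.commute)
      have e2: "1 / a = s * (1 / b)"
        using apos bpos sab by (simp add: field_simps)
      have blk: "sing_triple Ik Jk A s u v"
        unfolding sing_triple_def
      proof (intro conjI ballI)
        show "0 \<le> s" by (rule s0)
        have "(\<Sum>i\<in>Ik. (u i)\<^sup>2) = (\<Sum>i\<in>Ik. 1 / (a * a))"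
          by (rule sum.cong) (auto simp: u_def Ik_def power2_eq_square)
        thus "(\<Sum>i\<in>Ik. (u i)\<^sup>2) = 1" using aa apos cI by simp
        have "(\<Sum>j\<in>Jk. (v j)\<^sup>2) = (\<Sum>j\<in>Jk. 1 / (b * b))"
          by (rule sum.cong) (auto simp: v_def Jk_def power2_eq_square)
        thus "(\<Sum>j\<in>Jk. (v j)\<^sup>2) = 1" using bb bpos cJ by simp
      next
        fix i assume i: "i \<in> Ik"
        have "(\<Sum>j\<in>Jk. A i j * v j) = (\<Sum>j\<in>Jk. A i j) / b"
          by (simp add: sum_divide_distrib) (rule sum.cong, auto simp: v_def Jk_def)
        also have "\<dots> = s * u i" using rowk[OF i] e1 i by (simp add: u_def Ik_def)
        finally show "(\<Sum>j\<in>Jk. A i j * v j) = s * u i" .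
      next
        fix j assume j: "j \<in> Jk"
        have "(\<Sum>i\<in>Ik. A i j * u i) = (\<Sum>i\<in>Ik. A i j) / a"
          by (simp add: sum_divide_distrib) (rule sum.cong, auto simp: u_def Ik_def)
        also have "\<dots> = s * v j" using colk[OF j] e2 j by (simp add: v_def Jk_def)
        finally show "(\<Sum>i\<in>Ik. A i j * u i) = s * v j" .
      qed
      have lsv: "largest_singular_value Ik Jk A = s"
        unfolding largest_singular_value_def
      proof (rule Max_eqI)
        show "finite (singular_values Ik Jk A)" by (rule sv_finite[OF fJ])
        show "s \<in> singular_values Ik Jk A" using blk unfolding singular_values_def by blast
        fix y assume "y \<in> singular_values Ik Jk A"
        then obtain u' v' where st': "sing_triple Ik Jk A y u' v'" unfolding singular_values_def by blast
        show "y \<le> s" unfolding s_def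
          by (rule schur_bound[OF fI fJ _ rowk colk st'])
             (use Ann in \<open>auto simp: Ik_def Jk_def\<close>)
      qed
      have full: "sing_triple {..<r} {..<n} A s u v"
        unfolding sing_triple_def
      proof (intro conjI ballI)
        show "0 \<le> s" by (rule s0)
        have "(\<Sum>i<r. (u i)\<^sup>2) = (\<Sum>i\<in>Ik. (u i)\<^sup>2)"
          by (rule sum.mono_neutral_right) (auto simp: Ik_def u_def)
        also have "\<dots> = 1" using blk unfolding sing_triple_def by simp
        finally show "(\<Sum>i<r. (u i)\<^sup>2) = 1" .
        have "(\<Sum>j<n. (v j)\<^sup>2) = (\<Sum>j\<in>Jk. (v j)\<^sup>2)"
          by (rule sum.mono_neutral_right) (auto simp: Jk_def v_def)
        also have "\<dots> = 1" using blk unfolding sing_triple_def by simp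
        finally show "(\<Sum>j<n. (v j)\<^sup>2) = 1" .
      next
        fix i assume i: "i \<in> {..<r}"
        show "(\<Sum>j<n. A i j * v j) = s * u i"
        proof (cases "lab (G i) = k")
          case True
          have "(\<Sum>j<n. A i j * v j) = (\<Sum>j\<in>Jk. A i j * v j)"
            by (rule sum.mono_neutral_right) (auto simp: Jk_def v_def)
          also have "\<dots> = s * u i" using blk i True unfolding sing_triple_def Ik_def by simp
          finally show ?thesis .
        next
          case False
          have "(\<Sum>j<n. A i j * v j) = 0"
            by (rule sum.neutral) (use False i Azero in \<open>auto simp: v_def\<close>)
          thus ?thesis using False by (simp add: u_def)
        qed
      next
        fix j assume j: "j \<in> {..<n}"
        show "(\<Sum>i<r. A i j * u i) = s * v j"
        proof (cases "lab j = k")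
          case True
          have "(\<Sum>i<r. A i j * u i) = (\<Sum>i\<in>Ik. A i j * u i)"
            by (rule sum.mono_neutral_right) (auto simp: Ik_def u_def)
          also have "\<dots> = s * v j" using blk j True unfolding sing_triple_def Jk_def by simp
          finally show ?thesis .
        next
          case False
          have "(\<Sum>i<r. A i j * u i) = 0"
            by (rule sum.neutral) (use False j Azero in \<open>auto simp: u_def\<close>)
          thus ?thesis using False by (simp add: v_def)
        qed
      qed
      show "right_singular_vector {..<r} {..<n} A
              (largest_singular_value {i. i < r \<and> lab (G i) = k} {j. j < n \<and> lab j = k} A)
              (\<lambda>j. (if lab j = k then 1 else 0) / sqrt (real (card {l. l < n \<and> lab l = k})))"
        unfolding right_singular_vector_def
        using full lsv unfolding Ik_def Jk_def v_def b_def by (metis)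
    qed
  qed
  show ?thesis using main unfolding A_def RS_def .
qed
end
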